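(* Let $n>5$ with $n\equiv 3\pmod 4$, and consider odd $r\in[3,n-4]$. Then $E(D_n^s[r,n-r-1])$ attains its maximum at $r=3$, and $$E(D_n^s[3,n-4])>E(D_n^s[5,n-6])>\dots>E\!\left(D_n^s\!\left[\tfrac{n-1}{2},\tfrac{n-1}{2}\right]\right),$$ the chain running over odd $r=3,5,7,\dots,\frac{n-1}{2}$.
   Context: A signed digraph (sidigraph) is a digraph in which every arc carries a sign $+1$ or $-1$; the energy of a sidigraph is the sum of the absolute values of the real parts of the eigenvalues of its signed adjacency matrix. For $k\ge 2$, $C_k$ denotes a directed cycle of length $k$ all of whose arc signs multiply to $+1$. It is known that for odd $k$, $E(C_k)=\csc\frac{\pi}{2k}$ (and the same holds for a negative cycle of odd length). For integers $p,q\ge2$ with $p+q\le n$, $D_n^s[p,q]$ denotes an $n$-vertex sidigraph whose only directed cycles are two vertex-disjoint positive cycles $C_p$ and $C_q$ (other vertices lie on no directed cycle); its energy is $E(C_p)+E(C_q)$. *)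

theory Defs
  imports Complex_Main "Jordan_Normal_Form.Char_Poly"
begin

definition mat_energy :: "complex mat \<Rightarrow> real" where
  "mat_energy A = (\<Sum>z\<in>#proots (char_poly A). \<bar>Re z\<bar>)"

text \<open>Signed adjacency matrix of the representative n-vertex sidigraph
D_n^s[p,q]: vertices 0..p-1 form the directed cycle 0->1->...->p-1->0,
vertices p..p+q-1 form the directed cycle p->p+1->...->p+q-1->p, all arcs
carry sign +1 (so both cycles are positive), and the remaining vertices
p+q..n-1 carry no arcs (hence lie on no directed cycle).\<close>
definition two_cycle_mat :: "nat \<Rightarrow> nat \<Rightarrow> nat \<Rightarrow> complex mat" where
  "two_cycle_mat n p q = mat n n (\<lambda>(i, j).
     if (i < p \<and> j = (i + 1) mod p) \<or>
        (p \<le> i \<and> i < p + q \<and> j = p + (i - p + 1) mod q) then 1 else 0)"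

definition E_D :: "nat \<Rightarrow> nat \<Rightarrow> nat \<Rightarrow> real" where
  "E_D n p q = mat_energy (two_cycle_mat n p q)"

end

theory Submission
  imports Defs
begin


definition cycP :: "nat \<Rightarrow> complex poly mat" where
  "cycP p = mat p p (\<lambda>(i,j). (if i = j then [:0,1:] else 0) - (if j = (i+1) mod p then 1 else 0))"

lemma prod_diag_const:
  assumes "\<And>i. i < dim_row A \<Longrightarrow> A $$ (i,i) = c"
  shows "prod_list (diag_mat A) = c ^ dim_row A"
proof -
  have "diag_mat A = replicate (dim_row A) c"
    unfolding diag_mat_def by (rule nth_equalityI) (auto simp: assms)
  thus ?thesis by simp
qed

lemma det_cycP:
  assumes p: "p \<ge> 2"
  shows "det (cycP p) = [:0,1:]^p - 1"
proof -
  have C: "cycP p \<in> carrier_mat p p" unfolding cycP_def by simp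
  have lap: "det (cycP p) = (\<Sum>i<p. cycP p $$ (i,0) * cofactor (cycP p) i 0)"
    by (rule laplace_expansion_column[OF C]) (use p in auto)
  have "(\<Sum>i<p. cycP p $$ (i,0) * cofactor (cycP p) i 0)
      = (\<Sum>i\<in>{0, p-1}. cycP p $$ (i,0) * cofactor (cycP p) i 0)"
  proof (rule sum.mono_neutral_right)
    show "\<forall>i\<in>{..<p} - {0, p - 1}. cycP p $$ (i, 0) * cofactor (cycP p) i 0 = 0"
    proof
      fix i assume i: "i \<in> {..<p} - {0, p - 1}"
      hence "(i+1) mod p \<noteq> 0" using p by (auto simp: mod_eq_0_iff_dvd dest: dvd_imp_le)
      thus "cycP p $$ (i, 0) * cofactor (cycP p) i 0 = 0" using i unfolding cycP_def by auto
    qed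
  qed (use p in auto)
  also have "\<dots> = cycP p $$ (0,0) * cofactor (cycP p) 0 0 + cycP p $$ (p-1,0) * cofactor (cycP p) (p-1) 0"
    using p by simp
  also have "cycP p $$ (0,0) = [:0,1:]" using p unfolding cycP_def by auto
  also have "cycP p $$ (p-1,0) = -1" using p unfolding cycP_def by auto
  also have "cofactor (cycP p) 0 0 = [:0,1:]^(p-1)"
  proof -
    have "det (mat_delete (cycP p) 0 0) = prod_list (diag_mat (mat_delete (cycP p) 0 0))"
    proof (rule det_upper_triangular)
      show "mat_delete (cycP p) 0 0 \<in> carrier_mat (p-1) (p-1)" using mat_delete_carrier[OF C] .
      show "upper_triangular (mat_delete (cycP p) 0 0)"
        unfolding upper_triangular_def mat_delete_def cycP_def
        using p by (auto simp: mod_if split: if_splits)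
    qed
    also have "\<dots> = [:0,1:]^(p-1)"
      by (subst prod_diag_const[where c="[:0,1:]"]) (use p in \<open>auto simp: mat_delete_def cycP_def mod_if\<close>)
    finally show ?thesis unfolding cofactor_def by simp
  qed
  also have "cofactor (cycP p) (p-1) 0 = (-1)^(p-1) * (-1)^(p-1)"
  proof -
    have "det (mat_delete (cycP p) (p-1) 0) = prod_list (diag_mat (mat_delete (cycP p) (p-1) 0))"
    proof (rule det_lower_triangular)
      show "mat_delete (cycP p) (p-1) 0 \<in> carrier_mat (p-1) (p-1)" using mat_delete_carrier[OF C] .
      fix i j assume "i < j" "j < p - 1"
      thus "mat_delete (cycP p) (p-1) 0 $$ (i,j) = 0"
        unfolding mat_delete_def cycP_def using p by (auto simp: mod_if)
    qed
    also have "\<dots> = (-1)^(p-1)"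
      by (subst prod_diag_const[where c="-1"]) (use p in \<open>auto simp: mat_delete_def cycP_def mod_if\<close>)
    finally show ?thesis unfolding cofactor_def using p by simp
  qed
  finally show ?thesis using p
    by (simp add: lap power_mult_distrib[symmetric] flip: power_Suc) 
qed


lemma aux1: "[:-1:] = (-1::complex poly)" by (simp add: one_pCons)
lemma aux2: "pCons (-1) 1 = [:0,1:] - (1::complex poly)" by (simp add: one_pCons)

lemma char_poly_two_cycle:
  assumes p: "p \<ge> 2" and q: "q \<ge> 2" and pq: "p + q \<le> n"
  shows "char_poly (two_cycle_mat n p q) = ([:0,1:]^p - 1) * (([:0,1:]^q - 1) * [:0,1:]^(n-p-q))"
proof -
  define k where "k = n - p - q"
  have nk: "n = p + (q + k)" using pq k_def by simp
  have eq: "char_poly_matrix (two_cycle_mat n p q) =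
    four_block_mat (cycP p) (0\<^sub>m p (q+k)) (0\<^sub>m (q+k) p)
      (four_block_mat (cycP q) (0\<^sub>m q k) (0\<^sub>m k q) ([:0,1:] \<cdot>\<^sub>m 1\<^sub>m k))"
  proof (rule eq_matI)
    fix i j assume i: "i < dim_row (four_block_mat (cycP p) (0\<^sub>m p (q+k)) (0\<^sub>m (q+k) p)
      (four_block_mat (cycP q) (0\<^sub>m q k) (0\<^sub>m k q) ([:0,1:] \<cdot>\<^sub>m 1\<^sub>m k)))"
      and j: "j < dim_col (four_block_mat (cycP p) (0\<^sub>m p (q+k)) (0\<^sub>m (q+k) p)
      (four_block_mat (cycP q) (0\<^sub>m q k) (0\<^sub>m k q) ([:0,1:] \<cdot>\<^sub>m 1\<^sub>m k)))"
    have i': "i < n" and j': "j < n" using i j nk by (auto simp: cycP_def)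
    have L: "char_poly_matrix (two_cycle_mat n p q) $$ (i, j) =
      (if i = j then [:0,1:] else 0) -
      (if (i < p \<and> j = (i + 1) mod p) \<or> (p \<le> i \<and> i < p + q \<and> j = p + (i - p + 1) mod q) then 1 else 0)"
      using i' j' by (auto simp: char_poly_matrix_def two_cycle_mat_def aux1 aux2)
    have m1: "Suc i mod p < p" using p by simp
    have m1': "\<not> j < p \<Longrightarrow> j \<noteq> Suc i mod p" using m1 by auto
    have m2: "Suc (i - p) mod q < q" using q by simp
    show "char_poly_matrix (two_cycle_mat n p q) $$ (i, j) = four_block_mat (cycP p) (0\<^sub>m p (q+k)) (0\<^sub>m (q+k) p)
      (four_block_mat (cycP q) (0\<^sub>m q k) (0\<^sub>m k q) ([:0,1:] \<cdot>\<^sub>m 1\<^sub>m k)) $$ (i, j)"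
    proof (cases "i < p")
      case True
      then show ?thesis unfolding L using j' m1' True nk
        by (cases "j < p") (simp_all add: cycP_def)
    next
      case F1: False
      show ?thesis
      proof (cases "i < p + q")
        case True
        then obtain a where a: "i = p + a" "a < q" using F1 by (metis add_diff_inverse_nat nat_add_left_cancel_less)
        have L2: "char_poly_matrix (two_cycle_mat n p q) $$ (i, j) =
          (if i = j then [:0,1:] else 0) - (if j = p + Suc a mod q then 1 else 0)"
          unfolding L using a by simp
        have ma: "Suc a mod q < q" using q by simp
        show ?thesis
        proof (cases "j < p")
          case True
          then show ?thesis unfolding L2 using a nk j' by (simp add: cycP_def)
        next
          case False
          then obtain b where b: "j = p + b" by (metis add_diff_inverse_nat)
          show ?thesis
          proof (cases "b < q")
            case True
            then show ?thesis unfolding L2 using a b nk j' by (simp add: cycP_def)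
          next
            case False
            have "b \<noteq> Suc a mod q" using ma False by auto
            then show ?thesis unfolding L2 using a b nk j' False by (simp add: cycP_def)
          qed
        qed
      next
        case False
        then obtain a where a: "i = p + q + a" by (metis add_diff_inverse_nat)
        have L2: "char_poly_matrix (two_cycle_mat n p q) $$ (i, j) =
          (if i = j then [:0,1:] else 0)"
          unfolding L using a by simp
        show ?thesis
        proof (cases "j < p + q")
          case True
          then show ?thesis unfolding L2 using a nk j' i' by (cases "j < p") (simp_all add: cycP_def)
        next
          case False
          then obtain b where b: "j = p + q + b" by (metis add_diff_inverse_nat)
          show ?thesis unfolding L2 using a b nk j' i' by (simp add: cycP_def)
        qed
      qed
    qed
  qed (auto simp: char_poly_matrix_def two_cycle_mat_def cycP_def nk)
  have "char_poly (two_cycle_mat n p q) = det (cycP p) * (det (cycP q) * det ([:0,1:] \<cdot>\<^sub>m 1\<^sub>m k))"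
    unfolding char_poly_def eq
    apply (subst det_four_block_mat_upper_right_zero[where n=p and m="q+k"])
        apply (auto simp: cycP_def)[4]
    apply (subst det_four_block_mat_upper_right_zero[where n=q and m="k"])
        apply (auto simp: cycP_def)
    done
  thus ?thesis using det_cycP[OF p] det_cycP[OF q] k_def by simp
qed



lemma poly_X_pow_minus: "poly ([:0,1:]^p - 1 :: complex poly) z = z^p - 1"
  by (simp add: poly_power)

lemma Xp_nz:
  assumes p: "p \<ge> 1"
  shows "([:0,1:]^p - 1 :: complex poly) \<noteq> 0"
proof
  assume "([:0,1:]^p - 1 :: complex poly) = 0"
  hence "poly ([:0,1:]^p - 1 :: complex poly) 0 = 0" by simp
  thus False using p by (cases p) (simp_all add: poly_X_pow_minus)
qed

lemma proots_unity:
  assumes p: "p \<ge> 1"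
  shows "proots ([:0,1:]^p - 1 :: complex poly) = mset_set {z. z^p = 1}"
proof -
  let ?P = "[:0,1:]^p - 1 :: complex poly"
  let ?S = "{z::complex. z^p = 1}"
  have P0: "?P \<noteq> 0"
  proof
    assume "?P = 0"
    hence "poly ?P 0 = 0" by simp
    thus False using p by (cases p) (simp_all add: poly_X_pow_minus)
  qed
  have fin: "finite ?S" using p by (intro finite_roots_unity) auto
  have cardS: "card ?S = p" using p by (simp add: card_roots_unity_eq)
  have setP: "set_mset (proots ?P) = ?S" using P0 by (simp add: poly_X_pow_minus)
  have deg: "degree ?P \<le> p"
    by (rule degree_diff_le) (simp_all add: degree_linear_power)
  have sub: "mset_set ?S \<subseteq># proots ?P"
  proof (rule mset_subset_eqI)
    fix z
    show "count (mset_set ?S) z \<le> count (proots ?P) z"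
    proof (cases "z \<in> ?S")
      case True
      hence "z \<in># proots ?P" using setP by simp
      hence "count (proots ?P) z \<ge> 1" by (simp add: Suc_le_eq)
      then show ?thesis using fin True by simp
    next
      case False
      then show ?thesis using fin by simp
    qed
  qed
  have "size (proots ?P) \<le> p" using size_proots_le[of ?P] deg by simp
  moreover have "size (mset_set ?S) = p" using cardS by simp
  ultimately have "size (proots ?P) = size (mset_set ?S)"
    using size_mset_mono[OF sub] by simp
  hence "size (proots ?P - mset_set ?S) = 0" using size_Diff_submset[OF sub] by simp
  hence "proots ?P - mset_set ?S = {#}" by simp
  moreover have "mset_set ?S + (proots ?P - mset_set ?S) = proots ?P"
    using sub by (rule subset_mset.add_diff_inverse)
  ultimately show ?thesis by simp
qed

definition Sroots :: "nat \<Rightarrow> real" where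
  "Sroots p = (\<Sum>z\<in>{z::complex. z^p = 1}. \<bar>Re z\<bar>)"

lemma energy_two_cycle:
  assumes p: "p \<ge> 2" and q: "q \<ge> 2" and pq: "p + q \<le> n"
  shows "E_D n p q = Sroots p + Sroots q"
proof -
  have nz1: "([:0,1:]^p - 1 :: complex poly) \<noteq> 0" using p by (intro Xp_nz) auto
  have nz2: "([:0,1:]^q - 1 :: complex poly) \<noteq> 0" using q by (intro Xp_nz) auto
  have nz3: "([:0,1:]^(n-p-q) :: complex poly) \<noteq> 0" by simp
  have pX: "proots ([:0,1:] :: complex poly) = {#0#}"
    using proots_linear_factor[of "0::complex"] by simp
  have "proots (char_poly (two_cycle_mat n p q)) =
      mset_set {z. z^p = 1} + (mset_set {z. z^q = 1} + repeat_mset (n-p-q) {#0#})"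
    unfolding char_poly_two_cycle[OF p q pq]
    using nz1 nz2 nz3 p q
    by (simp add: proots_mult proots_power proots_unity pX)
  thus ?thesis
    unfolding E_D_def mat_energy_def Sroots_def
    by (simp add: sum_unfold_sum_mset)
qed



lemma inj_sigma:
  fixes m :: nat
  defines "p \<equiv> 2*m+1"
  shows "inj_on (\<lambda>k. (2*k+m) mod p) {..<p}"
proof (rule inj_onI)
  fix k l assume k: "k \<in> {..<p}" and l: "l \<in> {..<p}" and e: "(2*k+m) mod p = (2*l+m) mod p"
  have cop: "coprime p 2" unfolding p_def by simp
  { fix a b assume ab: "a \<le> b" "a < p" "b < p" "(2*a+m) mod p = (2*b+m) mod p"
    hence "p dvd (2*b+m) - (2*a+m)" using mod_eq_dvd_iff_nat[of "2*a+m" "2*b+m" p] by simp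
    hence "p dvd 2*(b-a)" by (simp add: diff_mult_distrib2)
    hence "p dvd (b - a)" using cop by (simp add: coprime_dvd_mult_right_iff)
    moreover have "b - a < p" using ab by simp
    ultimately have "a = b" using ab(1) by (metis diff_is_0_eq dvd_imp_le le_antisym not_less neq0_conv)
  }
  thus "k = l" using k l e by (metis le_cases lessThan_iff)
qed

lemma bij_sigma:
  fixes m :: nat
  defines "p \<equiv> 2*m+1"
  shows "bij_betw (\<lambda>k. (2*k+m) mod p) {..<p} {..<p}"
proof -
  have "(\<lambda>k. (2*k+m) mod p) ` {..<p} \<subseteq> {..<p}" unfolding p_def by auto
  moreover have "card ((\<lambda>k. (2*k+m) mod p) ` {..<p}) = card {..<p}"
    using inj_sigma[of m] unfolding p_def by (simp add: card_image)
  ultimately have "(\<lambda>k. (2*k+m) mod p) ` {..<p} = {..<p}"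
    by (intro card_subset_eq) auto
  thus ?thesis using inj_sigma[of m] unfolding p_def bij_betw_def by simp
qed

lemma abs_cos_shift: "\<bar>cos (x - real t * pi)\<bar> = \<bar>cos x\<bar>"
  by (simp add: cos_diff sin_npi cos_npi abs_mult)

lemma trig_sum:
  fixes m :: nat
  defines "p \<equiv> 2*m+1"
  shows "(\<Sum>k<p. \<bar>cos (2 * pi * real k / real p)\<bar>) = 1 / sin (pi / (2 * real p))"
proof -
  define \<theta> where "\<theta> = pi / real p"
  have pp: "real p > 0" unfolding p_def by simp
  have step1: "\<bar>cos (2 * pi * real k / real p)\<bar> = \<bar>cos ((real ((2*k+m) mod p) - real m) * \<theta>)\<bar>" for k
  proof -
    define t where "t = (2*k+m) div p"
    have d: "2*k+m = (2*k+m) mod p + p * t" unfolding t_def by simp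
    have e: "real ((2*k+m) mod p) = 2 * real k + real m - real p * real t"
      using arg_cong[OF d, of real] by simp
    have "(real ((2*k+m) mod p) - real m) * \<theta> = 2 * pi * real k / real p - real t * pi"
      unfolding \<theta>_def e using pp by (simp add: field_simps)
    thus ?thesis using abs_cos_shift by simp
  qed
  have "(\<Sum>k<p. \<bar>cos (2 * pi * real k / real p)\<bar>)
      = (\<Sum>k<p. \<bar>cos ((real ((2*k+m) mod p) - real m) * \<theta>)\<bar>)"
    using step1 by simp
  also have "\<dots> = (\<Sum>j<p. \<bar>cos ((real j - real m) * \<theta>)\<bar>)"
    using sum.reindex_bij_betw[OF bij_sigma[of m], of "\<lambda>j. \<bar>cos ((real j - real m) * \<theta>)\<bar>"]
    unfolding p_def by simp
  also have "\<dots> = (\<Sum>j<p. cos ((real j - real m) * \<theta>))"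
  proof (rule sum.cong)
    fix j assume j: "j \<in> {..<p}"
    have "\<bar>real j - real m\<bar> \<le> real m" using j unfolding p_def by auto
    hence "\<bar>(real j - real m) * \<theta>\<bar> \<le> real m * \<theta>" unfolding \<theta>_def using pp
      by (simp add: abs_mult divide_right_mono mult_right_mono)
    also have "real m * \<theta> < pi / 2" unfolding \<theta>_def p_def by (simp add: field_simps)
    finally have "cos ((real j - real m) * \<theta>) \<ge> 0"
      by (intro cos_ge_zero) auto
    thus "\<bar>cos ((real j - real m) * \<theta>)\<bar> = cos ((real j - real m) * \<theta>)" by simp
  qed simp
  finally have S: "(\<Sum>k<p. \<bar>cos (2 * pi * real k / real p)\<bar>) = (\<Sum>j<p. cos ((real j - real m) * \<theta>))" .
  define g where "g j = sin ((real j - real m - 1/2) * \<theta>)" for j :: nat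
  have tel: "2 * sin (\<theta>/2) * cos ((real j - real m) * \<theta>) = g (Suc j) - g j" for j
  proof -
    have "g (Suc j) = sin ((real j - real m) * \<theta> + \<theta>/2)" unfolding g_def
      by (simp add: algebra_simps)
    moreover have "g j = sin ((real j - real m) * \<theta> - \<theta>/2)" unfolding g_def
      by (simp add: algebra_simps)
    ultimately show ?thesis by (simp add: sin_add sin_diff)
  qed
  have "2 * sin (\<theta>/2) * (\<Sum>j<p. cos ((real j - real m) * \<theta>)) = (\<Sum>j<p. g (Suc j) - g j)"
    by (simp add: sum_distrib_left tel)
  also have "\<dots> = g p - g 0" by (rule sum_lessThan_telescope)
  also have "g p = 1"
  proof -
    have h: "(real p - real m - 1/2) * \<theta> = pi/2" unfolding \<theta>_def p_def by (simp add: field_simps)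
    show ?thesis unfolding g_def h by simp
  qed
  also have "g 0 = -1"
  proof -
    have h: "(real 0 - real m - 1/2) * \<theta> = -(pi/2)" unfolding \<theta>_def p_def by (simp add: field_simps)
    show ?thesis unfolding g_def h by simp
  qed
  finally have "2 * sin (\<theta>/2) * (\<Sum>j<p. cos ((real j - real m) * \<theta>)) = 2" by simp
  moreover have "sin (\<theta>/2) > 0" unfolding \<theta>_def using pp
    by (intro sin_gt_zero) (auto simp: field_simps p_def add_pos_nonneg)
  moreover have "\<theta>/2 = pi / (2 * real p)" unfolding \<theta>_def by simp
  ultimately show ?thesis using S by (simp add: field_simps)
qed



definition phiD :: "real \<Rightarrow> real" where "phiD u = u^2 * cos u / (sin u)^2"

lemma phi_deriv:
  assumes "0 < u" "u < pi/2"
  shows "(phiD has_real_derivative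
     ((2*u*cos u - u^2 * sin u) * (sin u)^2 - u^2*cos u * (2 * sin u * cos u)) / ((sin u)^2)^2) (at u)"
proof -
  have s: "sin u \<noteq> 0" using assms by (intro sin_gt_zero[THEN less_imp_neq, symmetric]) auto
  show ?thesis unfolding phiD_def[abs_def]
    by (rule derivative_eq_intros refl | use s in simp)+
qed

lemma phi_deriv_neg:
  assumes u: "0 < u" "u < pi/2"
  shows "((2*u*cos u - u^2 * sin u) * (sin u)^2 - u^2*cos u * (2 * sin u * cos u)) / ((sin u)^2)^2 < 0"
proof -
  define s where "s = sin u"
  define c where "c = cos u"
  have s0: "s > 0" unfolding s_def using u by (intro sin_gt_zero) auto
  have c0: "c > 0" unfolding c_def using u by (intro cos_gt_zero) auto
  have su: "s \<le> u" unfolding s_def using u by (intro sin_x_le_x) auto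
  have sc: "s^2 + c^2 = 1" unfolding s_def c_def by simp
  have "2*c*s \<le> 2*u*c" using su c0 by simp
  also have "2*u*c < u * (1 + c^2)"
  proof -
    have "s^2 > 0" using s0 by simp
    hence "c^2 < 1" using sc by linarith
    have "c < 1"
    proof (rule ccontr)
      assume "\<not> c < 1"
      hence "1 \<le> c" by simp
      hence "1 \<le> c * c" using mult_mono[of 1 c 1 c] by simp
      thus False using \<open>c^2 < 1\<close> by (simp add: power2_eq_square)
    qed
    hence "0 < u * (1 - c)^2" using u by simp
    thus ?thesis by (simp add: power2_eq_square algebra_simps)
  qed
  finally have key: "2*c*s - u*(1 + c^2) < 0" by simp
  have "(2*u*c - u^2 * s) * s^2 - u^2*c * (2 * s * c) = s * u * (2*c*s - u*(s^2 + 2*c^2))"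
    by (simp add: power2_eq_square algebra_simps)
  also have "s^2 + 2*c^2 = 1 + c^2" using sc by simp
  finally have N: "(2*u*c - u^2 * s) * s^2 - u^2*c * (2 * s * c) = s * u * (2*c*s - u*(1 + c^2))" .
  have "s * u * (2*c*s - u*(1 + c^2)) < 0"
    using key s0 u by (simp add: mult_pos_neg)
  thus ?thesis unfolding s_def[symmetric] c_def[symmetric] N using s0
    by (simp add: divide_neg_pos)
qed

lemma phi_decr:
  assumes "0 < u" "u < v" "v < pi/2"
  shows "phiD v < phiD u"
proof -
  have d: "\<exists>y. DERIV phiD x :> y \<and> y < 0" if "u \<le> x" "x \<le> v" for x
  proof -
    have x: "0 < x" "x < pi/2" using assms that by auto
    show ?thesis using phi_deriv[OF x] phi_deriv_neg[OF x] by blast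
  qed
  show ?thesis using DERIV_neg_imp_decreasing[OF assms(2) d] by blast
qed

definition Fcsc :: "real \<Rightarrow> real" where "Fcsc x = 1 / sin (pi / (2*x))"

lemma F_deriv:
  assumes x: "x > 1"
  shows "(Fcsc has_real_derivative (2/pi) * phiD (pi/(2*x))) (at x)"
proof -
  define u where "u = pi/(2*x)"
  have u: "0 < u" "u < pi/2" unfolding u_def using x by (auto simp: field_simps)
  have s: "sin u \<noteq> 0" using u by (intro sin_gt_zero[THEN less_imp_neq, symmetric]) auto
  have x0: "x \<noteq> 0" using x by simp
  have d1: "((\<lambda>x. pi/(2*x)) has_real_derivative (- pi/(2*x^2))) (at x)"
  proof -
    have h1: "((\<lambda>x. pi * inverse (2*x)) has_real_derivative pi * (- (2 * inverse ((2*x) ^ Suc (Suc 0))))) (at x)"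
      apply (rule DERIV_cmult)
      apply (rule DERIV_inverse_fun)
       apply (rule DERIV_cmult_Id)
      using x0 apply simp
      done
    have h2: "pi * (- (2 * inverse ((2*x) ^ Suc (Suc 0)))) = - pi/(2*x^2)"
      using x0 by (simp add: field_simps power2_eq_square)
    have e: "(\<lambda>x. pi/(2*x)) = (\<lambda>x. pi * inverse (2*x))" by (simp only: divide_inverse)
    show ?thesis unfolding e by (rule DERIV_cong[OF h1 h2])
  qed
  have d2: "((\<lambda>x. sin (pi/(2*x))) has_real_derivative cos (pi/(2*x)) * (- pi/(2*x^2))) (at x)"
    by (rule DERIV_chain2[OF DERIV_sin d1])
  have d3: "((\<lambda>x. inverse (sin (pi/(2*x)))) has_real_derivative
      - (cos (pi/(2*x)) * (- pi/(2*x^2)) * inverse ((sin (pi/(2*x))) ^ Suc (Suc 0)))) (at x)"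
    by (rule DERIV_inverse_fun[OF d2]) (use s in \<open>simp add: u_def\<close>)
  have FF: "Fcsc = (\<lambda>x. inverse (sin (pi/(2*x))))" by (simp add: Fcsc_def[abs_def] inverse_eq_divide)
  have h3: "- (cos (pi/(2*x)) * (- pi/(2*x^2)) * inverse ((sin (pi/(2*x))) ^ Suc (Suc 0))) = (2/pi) * phiD (pi/(2*x))"
  proof -
    define c where "c = cos (pi/(2*x))"
    define t where "t = sin (pi/(2*x))"
    have t: "t \<noteq> 0" using s t_def u_def by simp
    have "phiD (pi/(2*x)) = (pi/(2*x))^2 * c / t^2" unfolding phiD_def c_def t_def by simp
    moreover have "- (c * (- pi/(2*x^2)) * inverse (t ^ Suc (Suc 0))) = (2/pi) * ((pi/(2*x))^2 * c / t^2)"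
      using x0 t by (simp add: field_simps power2_eq_square)
    ultimately show ?thesis unfolding c_def t_def by simp
  qed
  show ?thesis unfolding FF by (rule DERIV_cong[OF d3 h3])
qed

lemma F_conv:
  assumes a: "1 < a" and d: "0 < d" and b: "a + d \<le> b"
  shows "Fcsc (a + d) - Fcsc a < Fcsc (b + d) - Fcsc b"
proof -
  define Fd where "Fd x = (2/pi) * phiD (pi/(2*x))" for x
  obtain z1 where z1: "a < z1" "z1 < a + d" "Fcsc (a+d) - Fcsc a = (a + d - a) * Fd z1"
    using MVT2[of a "a+d" Fcsc Fd] d a F_deriv unfolding Fd_def by force
  obtain z2 where z2: "b < z2" "z2 < b + d" "Fcsc (b+d) - Fcsc b = (b + d - b) * Fd z2"
    using MVT2[of b "b+d" Fcsc Fd] d a b F_deriv unfolding Fd_def by force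
  have "phiD (pi/(2*z1)) < phiD (pi/(2*z2))"
  proof (rule phi_decr)
    show "0 < pi/(2*z2)" using z1 z2 a b by auto
    show "pi/(2*z2) < pi/(2*z1)" using z1 z2 a b by (intro divide_strict_left_mono) auto
    show "pi/(2*z1) < pi/2" using z1 a by (auto simp: field_simps)
  qed
  hence "Fd z2 > Fd z1"
    unfolding Fd_def by (simp add: divide_strict_right_mono)
  hence "d * Fd z1 < d * Fd z2" using d by simp
  thus ?thesis using z1 z2 by simp
qed


lemma Sroots_eq:
  assumes "odd p"
  shows "Sroots p = Fcsc (real p)"
proof -
  obtain m where m: "p = 2*m+1" using assms oddE by blast
  have p0: "p > 0" using m by simp
  have "Sroots p = (\<Sum>k<p. \<bar>Re (cis (2 * pi * real k / real p))\<bar>)"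
    unfolding Sroots_def
    by (rule sum.reindex_bij_betw[OF Complex.bij_betw_roots_unity[OF p0], symmetric])
  also have "\<dots> = (\<Sum>k<p. \<bar>cos (2 * pi * real k / real p)\<bar>)" by simp
  also have "\<dots> = 1 / sin (pi / (2 * real p))" unfolding m by (rule trig_sum)
  finally show ?thesis unfolding Fcsc_def .
qed

lemma E_D_eq:
  assumes "odd p" "odd q" "p \<ge> 2" "q \<ge> 2" "p + q \<le> n"
  shows "E_D n p q = Fcsc (real p) + Fcsc (real q)"
  using energy_two_cycle[of p q n] Sroots_eq[of p] Sroots_eq[of q] assms by simp

theorem lemma3p17:
  fixes n :: nat
  assumes "n > 5" and "n mod 4 = 3"
  shows "(\<forall>r. odd r \<and> 3 \<le> r \<and> r \<le> n - 4 \<longrightarrow> E_D n r (n - r - 1) \<le> E_D n 3 (n - 4))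
       \<and> (\<forall>r. odd r \<and> 3 \<le> r \<and> r + 2 \<le> (n - 1) div 2 \<longrightarrow>
              E_D n r (n - r - 1) > E_D n (r + 2) (n - (r + 2) - 1))"
proof (intro conjI allI impI)
  have on: "odd n" using assms(2) by presburger
  have n7: "n \<ge> 7" using assms by presburger
  {
    fix r assume r: "odd r \<and> 3 \<le> r \<and> r \<le> n - 4"
    define q where "q = n - r - 1"
    have oq: "odd q" unfolding q_def using on r n7 by presburger
    have q3: "3 \<le> q" unfolding q_def using r n7 by linarith
    have rq: "r + q = n - 1" unfolding q_def using r n7 by linarith
    have o4: "odd (n - 4)" using on n7 by presburger
    have E1: "E_D n r q = Fcsc (real r) + Fcsc (real q)"
      using E_D_eq[of r q n] r oq q3 rq by simp
    have E3: "E_D n 3 (n - 4) = Fcsc 3 + Fcsc (real (n - 4))"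
      using E_D_eq[of 3 "n-4" n] o4 n7 by simp
    define lo where "lo = min r q"
    define hi where "hi = max r q"
    have sym: "Fcsc (real r) + Fcsc (real q) = Fcsc (real lo) + Fcsc (real hi)"
      unfolding lo_def hi_def by (cases "r \<le> q") (simp_all add: min_def max_def)
    have lh: "lo + hi = n - 1" "3 \<le> lo" "lo \<le> hi" using rq r q3 unfolding lo_def hi_def by auto
    have key: "Fcsc (real lo) + Fcsc (real hi) \<le> Fcsc 3 + Fcsc (real (n - 4))"
    proof (cases "lo = 3")
      case True
      hence "hi = n - 4" using lh by linarith
      thus ?thesis using True by simp
    next
      case False
      hence lo3: "real lo > 3" using lh by simp
      have c: "Fcsc (3 + (real lo - 3)) - Fcsc 3 < Fcsc (real hi + (real lo - 3)) - Fcsc (real hi)"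
        by (rule F_conv) (use lo3 lh in auto)
      have e1: "3 + (real lo - 3) = real lo" by simp
      have e2: "real hi + (real lo - 3) = real (n - 4)" using lh n7 by linarith
      show ?thesis using c unfolding e1 e2 by simp
    qed
    show "E_D n r (n - r - 1) \<le> E_D n 3 (n - 4)"
      using E1 E3 sym key unfolding q_def by simp
  }
  {
    fix r assume r: "odd r \<and> 3 \<le> r \<and> r + 2 \<le> (n - 1) div 2"
    have b: "2 * r + 5 \<le> n" using r by linarith
    have o1: "odd (n - r - 1)" using on r b by presburger
    have o2: "odd (n - (r + 2) - 1)" using on r b by presburger
    have o3: "odd (r + 2)" using r by simp
    have E1: "E_D n r (n - r - 1) = Fcsc (real r) + Fcsc (real (n - r - 1))"
      using E_D_eq[of r "n - r - 1" n] r o1 b by simp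
    have E2: "E_D n (r + 2) (n - (r + 2) - 1) = Fcsc (real (r + 2)) + Fcsc (real (n - (r + 2) - 1))"
      using E_D_eq[of "r + 2" "n - (r + 2) - 1" n] o2 o3 r b by simp
    have c: "Fcsc (real r + 2) - Fcsc (real r) < Fcsc (real (n - (r + 2) - 1) + 2) - Fcsc (real (n - (r + 2) - 1))"
      by (rule F_conv) (use r b in auto)
    have e1: "real r + 2 = real (r + 2)" by simp
    have e2: "real (n - (r + 2) - 1) + 2 = real (n - r - 1)" using b by linarith
    show "E_D n r (n - r - 1) > E_D n (r + 2) (n - (r + 2) - 1)"
      using c unfolding E1 E2 e1 e2 by simp
  }
qed

end
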